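(* For every $h\in\mathcal H$, $T_h:A_h\to\mathcal Y_h$ is a bijection with inverse $S_h$. Moreover: (i) $1-h^\top y>0$ for every $y\in\mathcal Y_h$ (so $S_h$ is well defined on $\mathcal Y_h$); (ii) $S_h(\mathcal Y_h)\subseteq\mathcal X_d$ and $T_h(A_h)\subseteq\mathcal Y_h$; (iii) if $h$ lies in the interior of $\mathcal H$, then $A_h=\mathcal X_d$; (iv) if $h$ lies in the boundary of $\mathcal H$, then $\mathcal Y_h$ is unbounded.
   Context: Fix an integer $d\ge 2$. Let $H\in\mathbb R^{d\times(d-1)}$ have orthonormal columns spanning $T_d:=\{u\in\mathbb R^d:\mathbf 1^\top u=0\}$, and set $\gamma_i:=H^\top e_i\in\mathbb R^{d-1}$ ($i=1,\dots,d$); then $\sum_i\gamma_i=0$ and $\gamma_i^\top\gamma_j=\delta_{ij}-1/d$. Let $\mathcal X_d:=\{x\in\mathbb R^{d-1}:1+\gamma_i^\top x\ge0\ \forall i\}$ and $\mathcal H:=\mathrm{conv}\{\gamma_1,\dots,\gamma_d\}$. For $h\in\mathcal H$ define $A_h:=\{x\in\mathcal X_d:1+h^\top x>0\}$, $\mathcal Y_h:=\{y\in\mathbb R^{d-1}:1+(\gamma_i-h)^\top y\ge 0\ \forall i\}$, $T_h(x):=x/(1+h^\top x)$ for $x\in A_h$, and $S_h(y):=y/(1-h^\top y)$ for $y\in\mathcal Y_h$. *)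

theory Defs
  imports "HOL-Analysis.Analysis"
begin

text \<open>Index type 'n has d elements (coordinates of R^d); type 'm has d-1 elements.
  H is a d x (d-1) real matrix.\<close>

definition gam :: "real^'m^'n \<Rightarrow> 'n \<Rightarrow> real^'m" where
  "gam H i = transpose H *v axis i 1"

definition Xd :: "real^'m^'n \<Rightarrow> (real^'m) set" where
  "Xd H = {x. \<forall>i. 1 + gam H i \<bullet> x \<ge> 0}"

definition HH :: "real^'m^'n \<Rightarrow> (real^'m) set" where
  "HH H = convex hull (range (gam H))"

definition Ah :: "real^'m^'n \<Rightarrow> real^'m \<Rightarrow> (real^'m) set" where
  "Ah H h = {x \<in> Xd H. 1 + h \<bullet> x > 0}"

definition Yh :: "real^'m^'n \<Rightarrow> real^'m \<Rightarrow> (real^'m) set" where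
  "Yh H h = {y. \<forall>i. 1 + (gam H i - h) \<bullet> y \<ge> 0}"

definition Th :: "real^'m \<Rightarrow> real^'m \<Rightarrow> real^'m" where
  "Th h x = (1 / (1 + h \<bullet> x)) *\<^sub>R x"

definition Sh :: "real^'m \<Rightarrow> real^'m \<Rightarrow> real^'m" where
  "Sh h y = (1 / (1 - h \<bullet> y)) *\<^sub>R y"

end

theory Submission
  imports Defs
begin

lemma gam_row: "gam H i = H $ i"
  unfolding gam_def
  by (simp add: vec_eq_iff matrix_vector_mult_def transpose_def axis_def
        if_distrib cong: if_cong)

lemma gam_inner: "gam H i \<bullet> y = (H *v y) $ i"
  by (simp add: gam_row inner_vec_def matrix_vector_mult_def)

theorem proposition3p2:
  fixes H :: "real^'m^'n" and h :: "real^'m"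
  assumes d: "CARD('n) \<ge> 2" and dm: "CARD('m) + 1 = CARD('n)"
    and orth: "transpose H ** H = mat 1"
    and span: "span (columns H) = {u :: real^'n. (\<Sum>i\<in>UNIV. u $ i) = 0}"
    and hH: "h \<in> HH H"
  shows "bij_betw (Th h) (Ah H h) (Yh H h)
    \<and> (\<forall>x\<in>Ah H h. Sh h (Th h x) = x)
    \<and> (\<forall>y\<in>Yh H h. Th h (Sh h y) = y)
    \<and> (\<forall>y\<in>Yh H h. 1 - h \<bullet> y > 0)
    \<and> Sh h ` Yh H h \<subseteq> Xd H
    \<and> Th h ` Ah H h \<subseteq> Yh H h
    \<and> (h \<in> interior (HH H) \<longrightarrow> Ah H h = Xd H)
    \<and> (h \<in> frontier (HH H) \<longrightarrow> \<not> bounded (Yh H h))"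
proof -
  have colsum: "(\<Sum>i\<in>UNIV. H $ i $ k) = 0" for k
  proof -
    have "column k H \<in> span (columns H)"
      by (intro span_base) (auto simp: columns_def)
    then show ?thesis using span by (simp add: column_def)
  qed
  have gsum: "(\<Sum>i\<in>UNIV. gam H i \<bullet> y) = 0" for y
  proof -
    have "(\<Sum>i\<in>UNIV. gam H i \<bullet> y) = (\<Sum>i\<in>UNIV. \<Sum>k\<in>UNIV. H$i$k * y$k)"
      by (simp add: gam_row inner_vec_def)
    also have "\<dots> = (\<Sum>k\<in>UNIV. (\<Sum>i\<in>UNIV. H$i$k) * y$k)"
      by (subst sum.swap) (simp add: sum_distrib_right)
    also have "\<dots> = 0" by (simp add: colsum)
    finally show ?thesis .
  qed
  have Hinj: "y = 0" if "\<And>i. gam H i \<bullet> y = 0" for y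
  proof -
    have "H *v y = 0" using that by (simp add: gam_inner vec_eq_iff)
    then have "transpose H *v (H *v y) = 0" by simp
    then show ?thesis using orth by (simp add: matrix_vector_mul_assoc)
  qed
  have pos: "1 - h \<bullet> y > 0" if y: "y \<in> Yh H h" for y
  proof -
    have ge: "\<And>i. 0 \<le> 1 + gam H i \<bullet> y - h \<bullet> y"
      using y by (simp add: Yh_def inner_diff_left algebra_simps)
    have "(\<Sum>i\<in>UNIV. 1 + gam H i \<bullet> y - h \<bullet> y) = real CARD('n) * (1 - h \<bullet> y)"
      using gsum[of y] by (simp add: sum.distrib sum_subtractf algebra_simps)
    moreover have "(\<Sum>i\<in>UNIV. 1 + gam H i \<bullet> y - h \<bullet> y) \<ge> 0"
      using ge by (simp add: sum_nonneg)
    ultimately have "1 - h \<bullet> y \<ge> 0"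
      by (simp add: zero_le_mult_iff)
    moreover have "1 - h \<bullet> y \<noteq> 0"
    proof
      assume e: "1 - h \<bullet> y = 0"
      have "(\<Sum>i\<in>UNIV. 1 + gam H i \<bullet> y - h \<bullet> y) = 0"
        using \<open>(\<Sum>i\<in>UNIV. 1 + gam H i \<bullet> y - h \<bullet> y) = _\<close> e by simp
      then have "\<forall>i\<in>UNIV. 1 + gam H i \<bullet> y - h \<bullet> y = 0"
        using sum_nonneg_eq_0_iff[of UNIV "\<lambda>i. 1 + gam H i \<bullet> y - h \<bullet> y"] ge by simp
      then have "\<And>i. gam H i \<bullet> y = 0" using e by simp
      then have "y = 0" by (rule Hinj)
      then show False using e by simp
    qed
    ultimately show ?thesis by simp
  qed
  have ST: "Sh h (Th h x) = x" if "x \<in> Ah H h" for x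
  proof -
    have p: "1 + h \<bullet> x > 0" using that by (simp add: Ah_def)
    have "1 - h \<bullet> Th h x = 1 / (1 + h \<bullet> x)"
      using p by (simp add: Th_def field_simps)
    then show ?thesis using p by (simp add: Sh_def Th_def)
  qed
  have TS: "Th h (Sh h y) = y" if "y \<in> Yh H h" for y
  proof -
    have p: "1 - h \<bullet> y > 0" using pos that by blast
    have "1 + h \<bullet> Sh h y = 1 / (1 - h \<bullet> y)"
      using p by (simp add: Sh_def field_simps)
    then show ?thesis using p by (simp add: Sh_def Th_def)
  qed
  have TY: "Th h x \<in> Yh H h" if "x \<in> Ah H h" for x
  proof -
    have p: "1 + h \<bullet> x > 0" and q: "\<And>i. 1 + gam H i \<bullet> x \<ge> 0"
      using that by (auto simp: Ah_def Xd_def)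
    have "1 + (gam H i - h) \<bullet> Th h x = (1 + gam H i \<bullet> x) / (1 + h \<bullet> x)" for i
      using p by (simp add: Th_def inner_diff_left field_simps)
    then show ?thesis using p q by (simp add: Yh_def)
  qed
  have SX: "Sh h y \<in> Ah H h" if "y \<in> Yh H h" for y
  proof -
    have p: "1 - h \<bullet> y > 0" using pos that by blast
    have q: "\<And>i. 1 + (gam H i - h) \<bullet> y \<ge> 0" using that by (simp add: Yh_def)
    have "1 + gam H i \<bullet> Sh h y = (1 + (gam H i - h) \<bullet> y) / (1 - h \<bullet> y)" for i
      using p by (simp add: Sh_def inner_diff_left field_simps)
    moreover have "1 + h \<bullet> Sh h y = 1 / (1 - h \<bullet> y)"
      using p by (simp add: Sh_def field_simps)
    ultimately show ?thesis using p q by (simp add: Ah_def Xd_def)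
  qed
  have bij: "bij_betw (Th h) (Ah H h) (Yh H h)"
    by (rule bij_betw_byWitness[where f'="Sh h"]) (use ST TS TY SX in auto)
  have conv: "convex (HH H)" by (simp add: HH_def convex_convex_hull)
  have hull_ge: "1 + z \<bullet> x \<ge> 0" if "x \<in> Xd H" "z \<in> HH H" for x z
  proof -
    have "HH H \<subseteq> {z. 1 + z \<bullet> x \<ge> 0}"
      unfolding HH_def
    proof (rule hull_minimal)
      show "range (gam H) \<subseteq> {z. 1 + z \<bullet> x \<ge> 0}" using that(1) by (auto simp: Xd_def)
      show "convex {z. 1 + z \<bullet> x \<ge> 0}"
      proof -
        have "{z. 1 + z \<bullet> x \<ge> 0} = {z. x \<bullet> z \<ge> -1}" by (auto simp: inner_commute)
        then show ?thesis using convex_halfspace_ge[of "-1" x] by simp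
      qed
    qed
    then show ?thesis using that by auto
  qed
  have iii: "Ah H h = Xd H" if hi: "h \<in> interior (HH H)"
  proof -
    have "1 + h \<bullet> x > 0" if x: "x \<in> Xd H" for x
    proof (rule ccontr)
      assume "\<not> 1 + h \<bullet> x > 0"
      moreover have "1 + h \<bullet> x \<ge> 0" using hull_ge x hi interior_subset by blast
      ultimately have e: "1 + h \<bullet> x = 0" by simp
      then have x0: "x \<noteq> 0" by auto
      obtain e where ep: "e > 0" and b: "ball h e \<subseteq> HH H"
        using hi by (meson mem_interior)
      define t where "t = e / (2 * norm x)"
      have t0: "t > 0" using ep x0 by (simp add: t_def)
      have "dist h (h - t *\<^sub>R x) = t * norm x" using t0 by (simp add: dist_norm)
      also have "\<dots> = e / 2" using x0 by (simp add: t_def)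
      finally have "h - t *\<^sub>R x \<in> HH H" using b ep by auto
      then have "1 + (h - t *\<^sub>R x) \<bullet> x \<ge> 0" using hull_ge x by blast
      moreover have "1 + (h - t *\<^sub>R x) \<bullet> x = - t * (x \<bullet> x)"
        using e by (simp add: inner_diff_left algebra_simps)
      moreover have "x \<bullet> x > 0" using x0 by simp
      moreover have "t * (x \<bullet> x) > 0" by (rule mult_pos_pos[OF t0 \<open>x \<bullet> x > 0\<close>])
      ultimately show False by linarith
    qed
    then show ?thesis by (auto simp: Ah_def)
  qed
  have iv: "\<not> bounded (Yh H h)" if hf: "h \<in> frontier (HH H)"
  proof -
    have hni: "h \<notin> interior (HH H)" using hf by (simp add: frontier_def)
    obtain a where a0: "a \<noteq> 0" and aS: "\<And>z. z \<in> HH H \<Longrightarrow> a \<bullet> h \<le> a \<bullet> z"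
    proof (cases "interior (HH H) = {}")
      case True
      obtain a b where a: "a \<noteq> 0" and ab: "HH H \<subseteq> {x. a \<bullet> x = b}"
        by (rule empty_interior_subset_hyperplane[OF conv True])
      have "a \<bullet> h \<le> a \<bullet> z" if "z \<in> HH H" for z
      proof -
        have "a \<bullet> h = b" "a \<bullet> z = b" using ab hH that by auto
        then show ?thesis by simp
      qed
      then show ?thesis using that[OF a] by blast
    next
      case False
      then have ri: "rel_interior (HH H) = interior (HH H)"
        by (simp add: rel_interior_nonempty_interior)
      have hcl: "h \<in> closure (HH H)" using hH closure_subset by blast
      have hri: "h \<notin> rel_interior (HH H)" using hni ri by simp
      obtain a where A: "a \<noteq> 0" and B: "\<And>y. y \<in> closure (HH H) \<Longrightarrow> a \<bullet> h \<le> a \<bullet> y"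
          and C: "\<And>y. y \<in> rel_interior (HH H) \<Longrightarrow> a \<bullet> h < a \<bullet> y"
        using supporting_hyperplane_relative_frontier[OF conv hcl hri] by blast
      show ?thesis
      proof (rule that[OF A])
        fix z assume "z \<in> HH H"
        then have "z \<in> closure (HH H)" using closure_subset by blast
        then show "a \<bullet> h \<le> a \<bullet> z" by (rule B)
      qed
    qed
    have gh: "HH H \<supseteq> range (gam H)" by (simp add: HH_def hull_subset)
    have inY: "t *\<^sub>R a \<in> Yh H h" if "t \<ge> 0" for t
    proof -
      have "1 + (gam H i - h) \<bullet> (t *\<^sub>R a) \<ge> 0" for i
      proof -
        have "a \<bullet> h \<le> a \<bullet> gam H i" using aS gh by auto
        then have "(gam H i - h) \<bullet> a \<ge> 0" by (simp add: inner_diff_right inner_commute[of _ a])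
        then show ?thesis using that by simp
      qed
      then show ?thesis by (simp add: Yh_def)
    qed
    show ?thesis
    proof
      assume "bounded (Yh H h)"
      then obtain B where B: "\<And>y. y \<in> Yh H h \<Longrightarrow> norm y \<le> B"
        by (meson bounded_iff)
      define t where "t = (\<bar>B\<bar> + 1) / norm a"
      have t0: "t \<ge> 0" by (simp add: t_def)
      have "norm (t *\<^sub>R a) = \<bar>B\<bar> + 1" using a0 t0 by (simp add: t_def)
      then show False using B[OF inY[OF t0]] by simp
    qed
  qed
  have v: "Sh h ` Yh H h \<subseteq> Xd H" using SX by (auto simp: Ah_def)
  have vi: "Th h ` Ah H h \<subseteq> Yh H h" using TY by blast
  show ?thesis
    using bij ST TS pos v vi iii iv by blast
qed

end
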